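(* Let $\mathbb{Q}_0,\mathbb{Q}_1$ be posets, $D_0$ a non-principal ultrafilter on $\omega$, and $Q_0\subseteq\mathbb{Q}_0$, $Q_1\subseteq\mathbb{Q}_1$ be $D_0$-linked subsets. Then $Q_0\times Q_1$ is $D_0$-linked in $\mathbb{Q}_0\times\mathbb{Q}_1$. In particular: (a) for any infinite cardinal $\mu$, the product of two $\mu$-$D_0$-linked posets is $\mu$-$D_0$-linked; (b) if $\theta$ is regular, the product of two $\theta$-$D_0$-Knaster posets is $\theta$-$D_0$-Knaster. The analogous statements hold with "uf-linked" in place of "$D_0$-linked" and "uf-Knaster" in place of "$D_0$-Knaster".
   Context: For a poset $\mathbb{P}$ and $\bar p=\langle p_n:n<\omega\rangle$ in $\mathbb{P}$, $\dot W(\bar p)$ names $\{n:p_n\in\dot G\}$. For a filter $F$ on $\omega$ containing the cofinite sets, $F^+$ is the family of subsets of $\omega$ meeting every member of $F$. $Q\subseteq\mathbb{P}$ is $F$-linked if for every sequence $\bar p$ in $Q$ there is $q\in\mathbb{P}$ forcing $\dot W(\bar p)\in F^+$; $Q$ is uf-linked if it is $D$-linked for every non-principal ultrafilter $D$ on $\omega$. $\mathbb{P}$ is $\mu$-$F$-linked ($\mu$-uf-linked) if it is the union of $\mu$ many $F$-linked (uf-linked) subsets; $\mathbb{P}$ is $\theta$-$F$-Knaster ($\theta$-uf-Knaster) if every subset of size $\theta$ contains an $F$-linked (uf-linked) subset of size $\theta$. *)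

theory Defs
  imports Main
begin

definition poset :: "'a set \<Rightarrow> ('a \<Rightarrow> 'a \<Rightarrow> bool) \<Rightarrow> bool" where
  "poset P le \<longleftrightarrow> (\<forall>p\<in>P. le p p)
     \<and> (\<forall>p\<in>P. \<forall>q\<in>P. le p q \<and> le q p \<longrightarrow> p = q)
     \<and> (\<forall>p\<in>P. \<forall>q\<in>P. \<forall>r\<in>P. le p q \<and> le q r \<longrightarrow> le p r)"

definition prod_le :: "('a \<Rightarrow> 'a \<Rightarrow> bool) \<Rightarrow> ('b \<Rightarrow> 'b \<Rightarrow> bool)
    \<Rightarrow> 'a \<times> 'b \<Rightarrow> 'a \<times> 'b \<Rightarrow> bool" where
  "prod_le le0 le1 x y \<longleftrightarrow> le0 (fst x) (fst y) \<and> le1 (snd x) (snd y)"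

definition compat :: "'a set \<Rightarrow> ('a \<Rightarrow> 'a \<Rightarrow> bool) \<Rightarrow> 'a \<Rightarrow> 'a \<Rightarrow> bool" where
  "compat P le p q \<longleftrightarrow> (\<exists>r\<in>P. le r p \<and> le r q)"

definition filter_on_nat :: "nat set set \<Rightarrow> bool" where
  "filter_on_nat F \<longleftrightarrow> UNIV \<in> F \<and> {} \<notin> F
     \<and> (\<forall>A\<in>F. \<forall>B\<in>F. A \<inter> B \<in> F)
     \<and> (\<forall>A B. A \<in> F \<and> A \<subseteq> B \<longrightarrow> B \<in> F)"

definition nonprincipal_ultrafilter :: "nat set set \<Rightarrow> bool" where
  "nonprincipal_ultrafilter D \<longleftrightarrow> filter_on_nat D
     \<and> (\<forall>A. A \<in> D \<or> - A \<in> D)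
     \<and> (\<forall>A. finite A \<longrightarrow> A \<notin> D)"

definition Fplus :: "nat set set \<Rightarrow> nat set set" where
  "Fplus F = {X. \<forall>A\<in>F. X \<inter> A \<noteq> {}}"

text \<open>\<open>forces_W_in_Fplus P le F pbar q\<close>: the condition q forces that
  W(pbar) = {n. pbar n \<in> G} belongs to F^+ (F a ground-model filter).
  This is the standard unfolding of the forcing relation: for every
  A \<in> F, the set of conditions below some p_n with n \<in> A is dense below q,
  i.e. every r \<le> q is compatible with p_n for some n \<in> A.\<close>
definition forces_W_in_Fplus ::
    "'a set \<Rightarrow> ('a \<Rightarrow> 'a \<Rightarrow> bool) \<Rightarrow> nat set set \<Rightarrow> (nat \<Rightarrow> 'a) \<Rightarrow> 'a \<Rightarrow> bool" where
  "forces_W_in_Fplus P le F pbar q \<longleftrightarrow>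
     (\<forall>r\<in>P. le r q \<longrightarrow> (\<forall>A\<in>F. \<exists>n\<in>A. compat P le r (pbar n)))"

definition F_linked :: "'a set \<Rightarrow> ('a \<Rightarrow> 'a \<Rightarrow> bool) \<Rightarrow> nat set set \<Rightarrow> 'a set \<Rightarrow> bool" where
  "F_linked P le F Q \<longleftrightarrow> Q \<subseteq> P \<and>
     (\<forall>pbar. (\<forall>n. pbar n \<in> Q) \<longrightarrow> (\<exists>q\<in>P. forces_W_in_Fplus P le F pbar q))"

definition uf_linked :: "'a set \<Rightarrow> ('a \<Rightarrow> 'a \<Rightarrow> bool) \<Rightarrow> 'a set \<Rightarrow> bool" where
  "uf_linked P le Q \<longleftrightarrow> (\<forall>D. nonprincipal_ultrafilter D \<longrightarrow> F_linked P le D Q)"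

text \<open>mu-F-linked: P is the union of mu many F-linked subsets, where mu is
  given as the cardinality of an index set K.\<close>
definition mu_F_linked :: "'k set \<Rightarrow> 'a set \<Rightarrow> ('a \<Rightarrow> 'a \<Rightarrow> bool) \<Rightarrow> nat set set \<Rightarrow> bool" where
  "mu_F_linked K P le F \<longleftrightarrow> (\<exists>Q. (\<forall>i\<in>K. F_linked P le F (Q i)) \<and> P = (\<Union>i\<in>K. Q i))"

definition mu_uf_linked :: "'k set \<Rightarrow> 'a set \<Rightarrow> ('a \<Rightarrow> 'a \<Rightarrow> bool) \<Rightarrow> bool" where
  "mu_uf_linked K P le \<longleftrightarrow> (\<exists>Q. (\<forall>i\<in>K. uf_linked P le (Q i)) \<and> P = (\<Union>i\<in>K. Q i))"

text \<open>theta-F-Knaster, theta a cardinal (well-order relation, BNF cardinals).\<close>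
definition theta_F_Knaster :: "'c rel \<Rightarrow> 'a set \<Rightarrow> ('a \<Rightarrow> 'a \<Rightarrow> bool) \<Rightarrow> nat set set \<Rightarrow> bool" where
  "theta_F_Knaster \<theta> P le F \<longleftrightarrow> (\<forall>X. X \<subseteq> P \<and> (card_of X, \<theta>) \<in> ordIso \<longrightarrow>
     (\<exists>Y. Y \<subseteq> X \<and> (card_of Y, \<theta>) \<in> ordIso \<and> F_linked P le F Y))"

definition theta_uf_Knaster :: "'c rel \<Rightarrow> 'a set \<Rightarrow> ('a \<Rightarrow> 'a \<Rightarrow> bool) \<Rightarrow> bool" where
  "theta_uf_Knaster \<theta> P le \<longleftrightarrow> (\<forall>X. X \<subseteq> P \<and> (card_of X, \<theta>) \<in> ordIso \<longrightarrow>
     (\<exists>Y. Y \<subseteq> X \<and> (card_of Y, \<theta>) \<in> ordIso \<and> uf_linked P le Y))"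

end

theory Submission
  imports Defs
begin

lemma uf_plus:
  assumes "nonprincipal_ultrafilter D" "\<forall>A\<in>D. X \<inter> A \<noteq> {}"
  shows "X \<in> D"
proof (rule ccontr)
  assume "X \<notin> D"
  then have "- X \<in> D" using assms(1) unfolding nonprincipal_ultrafilter_def by blast
  with assms(2) show False by blast
qed

lemma uf_inter:
  assumes "nonprincipal_ultrafilter D" "A \<in> D" "B \<in> D"
  shows "A \<inter> B \<in> D"
  using assms unfolding nonprincipal_ultrafilter_def filter_on_nat_def by blast

lemma uf_nonempty:
  assumes "nonprincipal_ultrafilter D" "A \<in> D"
  shows "A \<noteq> {}"
  using assms unfolding nonprincipal_ultrafilter_def filter_on_nat_def by blast

lemma prod_linked:
  assumes D: "nonprincipal_ultrafilter D" and L0: "F_linked P0 le0 D Q0"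
    and L1: "F_linked P1 le1 D Q1"
  shows "F_linked (P0 \<times> P1) (prod_le le0 le1) D (Q0 \<times> Q1)"
  unfolding F_linked_def
proof (intro conjI allI impI)
  show "Q0 \<times> Q1 \<subseteq> P0 \<times> P1" using L0 L1 unfolding F_linked_def by blast
  fix pbar :: "nat \<Rightarrow> 'a \<times> 'b"
  assume pb: "\<forall>n. pbar n \<in> Q0 \<times> Q1"
  obtain q0 where q0: "q0 \<in> P0" "forces_W_in_Fplus P0 le0 D (\<lambda>n. fst (pbar n)) q0"
    using L0 pb unfolding F_linked_def by (metis mem_Times_iff)
  obtain q1 where q1: "q1 \<in> P1" "forces_W_in_Fplus P1 le1 D (\<lambda>n. snd (pbar n)) q1"
    using L1 pb unfolding F_linked_def by (metis mem_Times_iff)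
  have "forces_W_in_Fplus (P0 \<times> P1) (prod_le le0 le1) D pbar (q0, q1)"
    unfolding forces_W_in_Fplus_def
  proof (intro ballI impI)
    fix r A assume r: "r \<in> P0 \<times> P1" "prod_le le0 le1 r (q0, q1)" and A: "A \<in> D"
    define S0 where "S0 = {n. compat P0 le0 (fst r) (fst (pbar n))}"
    define S1 where "S1 = {n. compat P1 le1 (snd r) (snd (pbar n))}"
    have "S0 \<in> D"
      apply (rule uf_plus[OF D])
      using q0(2) r unfolding forces_W_in_Fplus_def S0_def prod_le_def by fastforce
    moreover have "S1 \<in> D"
      apply (rule uf_plus[OF D])
      using q1(2) r unfolding forces_W_in_Fplus_def S1_def prod_le_def by fastforce
    ultimately have "S0 \<inter> S1 \<inter> A \<in> D" using uf_inter[OF D] A by blast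
    then obtain n where n: "n \<in> A" "n \<in> S0" "n \<in> S1" using uf_nonempty[OF D] by blast
    then obtain s0 s1 where "s0 \<in> P0" "le0 s0 (fst r)" "le0 s0 (fst (pbar n))"
       "s1 \<in> P1" "le1 s1 (snd r)" "le1 s1 (snd (pbar n))"
      unfolding S0_def S1_def compat_def by blast
    then have "compat (P0 \<times> P1) (prod_le le0 le1) r (pbar n)"
      unfolding compat_def prod_le_def by (intro bexI[of _ "(s0, s1)"]) auto
    with n show "\<exists>n\<in>A. compat (P0 \<times> P1) (prod_le le0 le1) r (pbar n)" by blast
  qed
  then show "\<exists>q\<in>P0 \<times> P1. forces_W_in_Fplus (P0 \<times> P1) (prod_le le0 le1) D pbar q"
    using q0 q1 by blast
qed

lemma linked_mono:
  assumes "F_linked P le D Z" "Y \<subseteq> Z"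
  shows "F_linked P le D Y"
  using assms unfolding F_linked_def by blast

lemma linked_single:
  assumes "poset P le" "a \<in> P" "{} \<notin> D"
  shows "F_linked P le D {a}"
  unfolding F_linked_def
proof (intro conjI allI impI)
  show "{a} \<subseteq> P" using assms by blast
  fix pbar :: "nat \<Rightarrow> 'a" assume "\<forall>n. pbar n \<in> {a}"
  then have pa: "pbar n = a" for n by blast
  have "forces_W_in_Fplus P le D pbar a"
    unfolding forces_W_in_Fplus_def
  proof (intro ballI impI)
    fix r A assume r: "r \<in> P" "le r a" and A: "A \<in> D"
    have "A \<noteq> {}" using A assms(3) by metis
    then obtain n where "n \<in> A" by blast
    moreover have "le r r" using assms(1) r(1) unfolding poset_def by blast
    ultimately show "\<exists>n\<in>A. compat P le r (pbar n)"
      using r unfolding compat_def pa by blast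
  qed
  then show "\<exists>q\<in>P. forces_W_in_Fplus P le D pbar q" using assms by blast
qed


context includes cardinal_syntax
begin

lemma mu_gen:
  assumes K: "infinite K"
    and Q0: "\<forall>i\<in>K. LA (Q0 i)" "P0 = (\<Union>i\<in>K. Q0 i)"
    and Q1: "\<forall>i\<in>K. LB (Q1 i)" "P1 = (\<Union>i\<in>K. Q1 i)"
    and pr: "\<And>A B. LA A \<Longrightarrow> LB B \<Longrightarrow> L (A \<times> B)"
  shows "\<exists>Q. (\<forall>i\<in>K. L (Q i)) \<and> P0 \<times> P1 = (\<Union>i\<in>K. Q i)"
proof -
  have "|K| =o |K \<times> K|" using card_of_Times_same_infinite[OF K] ordIso_symmetric by blast
  then obtain f where f: "bij_betw f K (K \<times> K)" using card_of_ordIso by blast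
  define Q where "Q i = Q0 (fst (f i)) \<times> Q1 (snd (f i))" for i
  have "\<forall>i\<in>K. L (Q i)"
  proof
    fix i assume "i \<in> K"
    then have "f i \<in> K \<times> K" using f bij_betwE by blast
    then show "L (Q i)" unfolding Q_def using pr Q0 Q1 by (simp add: mem_Times_iff)
  qed
  moreover have "P0 \<times> P1 = (\<Union>i\<in>K. Q i)"
  proof
    show "P0 \<times> P1 \<subseteq> (\<Union>i\<in>K. Q i)"
    proof
      fix x assume "x \<in> P0 \<times> P1"
      then obtain a b where x: "x = (a, b)" "a \<in> P0" "b \<in> P1" by blast
      then obtain j k where jk: "j \<in> K" "k \<in> K" "a \<in> Q0 j" "b \<in> Q1 k" using Q0 Q1 by blast
      then obtain i where "i \<in> K" "f i = (j, k)" using f unfolding bij_betw_def by (metis SigmaI imageE)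
      then show "x \<in> (\<Union>i\<in>K. Q i)" unfolding Q_def using x jk by force
    qed
    show "(\<Union>i\<in>K. Q i) \<subseteq> P0 \<times> P1"
    proof
      fix x assume "x \<in> (\<Union>i\<in>K. Q i)"
      then obtain i where i: "i \<in> K" "x \<in> Q i" by blast
      then have "f i \<in> K \<times> K" using f bij_betwE by blast
      then show "x \<in> P0 \<times> P1" using i Q0 Q1 unfolding Q_def by (auto simp: mem_Times_iff)
    qed
  qed
  ultimately show ?thesis by blast
qed

lemma knaster_step:
  assumes reg: "Cinfinite \<theta>" "regularCard \<theta>"
    and X: "|X| =o \<theta>" and fX: "f ` X \<subseteq> P"
    and Kn: "\<forall>Z. Z \<subseteq> P \<and> |Z| =o \<theta> \<longrightarrow> (\<exists>Y. Y \<subseteq> Z \<and> |Y| =o \<theta> \<and> L Y)"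
    and sing: "\<forall>a\<in>P. L {a}"
  shows "\<exists>X'. X' \<subseteq> X \<and> |X'| =o \<theta> \<and> L (f ` X')"
proof -
  have WT: "Well_order \<theta>" using reg(1) card_order_on_well_order_on by blast
  show ?thesis
  proof (cases "|f ` X| =o \<theta>")
    case True
    have "f ` X \<subseteq> P \<and> |f ` X| =o \<theta>" using True fX by blast
    then have "\<exists>Y. Y \<subseteq> f ` X \<and> |Y| =o \<theta> \<and> L Y" by (rule Kn[rule_format])
    then obtain Z where Z: "Z \<subseteq> f ` X" "|Z| =o \<theta>" "L Z" by blast
    define X' where "X' = X \<inter> f -` Z"
    have im: "f ` X' = Z" using Z(1) unfolding X'_def by blast
    have "|X'| \<le>o |X|" unfolding X'_def by (rule card_of_mono1) blast
    then have le1: "|X'| \<le>o \<theta>" using X by (rule ordLeq_ordIso_trans)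
    have "|Z| \<le>o |X'|" using card_of_image[of f X'] unfolding im .
    then have le2: "\<theta> \<le>o |X'|" by (rule ordIso_ordLeq_trans[OF ordIso_symmetric[OF Z(2)]])
    have "|X'| =o \<theta>" unfolding ordIso_iff_ordLeq using le1 le2 by (rule conjI)
    moreover have "X' \<subseteq> X" unfolding X'_def by blast
    ultimately show ?thesis using im Z(3) by blast
  next
    case False
    have "|f ` X| \<le>o \<theta>" by (rule ordLeq_ordIso_trans[OF card_of_image X])
    then have lt: "|f ` X| <o \<theta>" using False unfolding ordLeq_iff_ordLess_or_ordIso by blast
    have "\<exists>a\<in>f ` X. \<not> |X \<inter> f -` {a}| <o \<theta>"
    proof (rule ccontr)
      assume "\<not> ?thesis"
      then have "\<forall>a\<in>f ` X. |X \<inter> f -` {a}| <o \<theta>" by blast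
      then have "|\<Union>a\<in>f ` X. X \<inter> f -` {a}| <o \<theta>"
        by (rule card_of_UNION_ordLess_infinite_Field_regularCard[OF reg(2) reg(1) lt])
      moreover have "(\<Union>a\<in>f ` X. X \<inter> f -` {a}) = X" by blast
      ultimately have "|X| <o \<theta>" by simp
      then show False using X not_ordLess_ordIso by blast
    qed
    then obtain a where a: "a \<in> f ` X" "\<not> |X \<inter> f -` {a}| <o \<theta>" by blast
    define X' where "X' = X \<inter> f -` {a}"
    have "|X'| \<le>o |X|" unfolding X'_def by (rule card_of_mono1) blast
    then have le1: "|X'| \<le>o \<theta>" using X by (rule ordLeq_ordIso_trans)
    have le2: "\<theta> \<le>o |X'|"
      using a(2) not_ordLess_iff_ordLeq[OF WT card_of_Well_order] unfolding X'_def by blast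
    have "|X'| =o \<theta>" unfolding ordIso_iff_ordLeq using le1 le2 by (rule conjI)
    moreover have "f ` X' = {a}" using a(1) unfolding X'_def by blast
    moreover have "L {a}" using sing fX a(1) by blast
    moreover have "X' \<subseteq> X" unfolding X'_def by blast
    ultimately show ?thesis by metis
  qed
qed

lemma knaster_gen:
  assumes reg: "Cinfinite \<theta>" "regularCard \<theta>"
    and K0: "\<forall>Z. Z \<subseteq> P0 \<and> |Z| =o \<theta> \<longrightarrow> (\<exists>Y. Y \<subseteq> Z \<and> |Y| =o \<theta> \<and> L0 Y)"
    and S0: "\<forall>a\<in>P0. L0 {a}"
    and K1: "\<forall>Z. Z \<subseteq> P1 \<and> |Z| =o \<theta> \<longrightarrow> (\<exists>Y. Y \<subseteq> Z \<and> |Y| =o \<theta> \<and> L1 Y)"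
    and S1: "\<forall>a\<in>P1. L1 {a}"
    and pr: "\<And>A B Y. L0 A \<Longrightarrow> L1 B \<Longrightarrow> Y \<subseteq> A \<times> B \<Longrightarrow> Y \<subseteq> P0 \<times> P1 \<Longrightarrow> L Y"
  shows "\<forall>X. X \<subseteq> P0 \<times> P1 \<and> |X| =o \<theta> \<longrightarrow> (\<exists>Y. Y \<subseteq> X \<and> |Y| =o \<theta> \<and> L Y)"
proof (intro allI impI)
  fix X assume X: "X \<subseteq> P0 \<times> P1 \<and> |X| =o \<theta>"
  then have "fst ` X \<subseteq> P0" by auto
  then obtain X1 where X1: "X1 \<subseteq> X" "|X1| =o \<theta>" "L0 (fst ` X1)"
    using knaster_step[where f=fst, OF reg conjunct2[OF X] _ K0 S0] by blast
  have "snd ` X1 \<subseteq> P1" using X X1(1) by auto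
  then obtain X2 where X2: "X2 \<subseteq> X1" "|X2| =o \<theta>" "L1 (snd ` X2)"
    using knaster_step[where f=snd, OF reg X1(2) _ K1 S1] by blast
  have "X2 \<subseteq> fst ` X1 \<times> snd ` X2" using X2(1) by force
  moreover have "X2 \<subseteq> P0 \<times> P1" using X X1(1) X2(1) by blast
  ultimately have "L X2" using pr X1(3) X2(3) by blast
  then show "\<exists>Y. Y \<subseteq> X \<and> |Y| =o \<theta> \<and> L Y" using X1(1) X2(1,2) by blast
qed

end

lemma ufl_single:
  assumes "poset P le" "a \<in> P"
  shows "uf_linked P le {a}"
  unfolding uf_linked_def
proof (intro allI impI)
  fix D assume "nonprincipal_ultrafilter D"
  then have "{} \<notin> D" unfolding nonprincipal_ultrafilter_def filter_on_nat_def by blast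
  then show "F_linked P le D {a}" using linked_single[OF assms] by blast
qed

lemma ufl_prod:
  assumes "uf_linked P0 le0 Q0" "uf_linked P1 le1 Q1"
  shows "uf_linked (P0 \<times> P1) (prod_le le0 le1) (Q0 \<times> Q1)"
  unfolding uf_linked_def
proof (intro allI impI)
  fix D assume D: "nonprincipal_ultrafilter D"
  show "F_linked (P0 \<times> P1) (prod_le le0 le1) D (Q0 \<times> Q1)"
    using prod_linked[OF D] assms D unfolding uf_linked_def by blast
qed

lemma ufl_mono:
  assumes "uf_linked P le Z" "Y \<subseteq> Z"
  shows "uf_linked P le Y"
  unfolding uf_linked_def
proof (intro allI impI)
  fix D assume D: "nonprincipal_ultrafilter D"
  then have "F_linked P le D Z" using assms(1) unfolding uf_linked_def by blast
  then show "F_linked P le D Y" using linked_mono assms(2) by blast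
qed

lemma single_D:
  assumes "nonprincipal_ultrafilter D" "poset P le"
  shows "\<forall>a\<in>P. F_linked P le D {a}"
proof -
  have "{} \<notin> D" using assms(1) unfolding nonprincipal_ultrafilter_def filter_on_nat_def by blast
  show ?thesis
  proof
    fix a assume "a \<in> P"
    show "F_linked P le D {a}" by (rule linked_single[OF assms(2) \<open>a \<in> P\<close> \<open>{} \<notin> D\<close>])
  qed
qed

theorem theorem3p19:
  fixes P0 :: "'a set" and le0 :: "'a \<Rightarrow> 'a \<Rightarrow> bool"
    and P1 :: "'b set" and le1 :: "'b \<Rightarrow> 'b \<Rightarrow> bool"
  assumes "poset P0 le0" and "poset P1 le1"
  shows
    "(\<forall>D Q0 Q1. nonprincipal_ultrafilter D \<and> F_linked P0 le0 D Q0 \<and> F_linked P1 le1 D Q1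
        \<longrightarrow> F_linked (P0 \<times> P1) (prod_le le0 le1) D (Q0 \<times> Q1))
     \<and> (\<forall>D (K :: 'k set). nonprincipal_ultrafilter D \<and> infinite K
          \<and> mu_F_linked K P0 le0 D \<and> mu_F_linked K P1 le1 D
        \<longrightarrow> mu_F_linked K (P0 \<times> P1) (prod_le le0 le1) D)
     \<and> (\<forall>D (\<theta> :: 'c rel). nonprincipal_ultrafilter D \<and> Cinfinite \<theta> \<and> regularCard \<theta>
          \<and> theta_F_Knaster \<theta> P0 le0 D \<and> theta_F_Knaster \<theta> P1 le1 D
        \<longrightarrow> theta_F_Knaster \<theta> (P0 \<times> P1) (prod_le le0 le1) D)
     \<and> (\<forall>Q0 Q1. uf_linked P0 le0 Q0 \<and> uf_linked P1 le1 Q1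
        \<longrightarrow> uf_linked (P0 \<times> P1) (prod_le le0 le1) (Q0 \<times> Q1))
     \<and> (\<forall>K :: 'k set. infinite K \<and> mu_uf_linked K P0 le0 \<and> mu_uf_linked K P1 le1
        \<longrightarrow> mu_uf_linked K (P0 \<times> P1) (prod_le le0 le1))
     \<and> (\<forall>\<theta> :: 'c rel. Cinfinite \<theta> \<and> regularCard \<theta>
          \<and> theta_uf_Knaster \<theta> P0 le0 \<and> theta_uf_Knaster \<theta> P1 le1
        \<longrightarrow> theta_uf_Knaster \<theta> (P0 \<times> P1) (prod_le le0 le1))"
proof (intro conjI allI impI)
  fix D Q0 Q1
  assume "nonprincipal_ultrafilter D \<and> F_linked P0 le0 D Q0 \<and> F_linked P1 le1 D Q1"
  then show "F_linked (P0 \<times> P1) (prod_le le0 le1) D (Q0 \<times> Q1)" using prod_linked by blast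
next
  fix D and K :: "'k set"
  assume H: "nonprincipal_ultrafilter D \<and> infinite K \<and> mu_F_linked K P0 le0 D \<and> mu_F_linked K P1 le1 D"
  then obtain Q0 Q1 where Q: "\<forall>i\<in>K. F_linked P0 le0 D (Q0 i)" "P0 = (\<Union>i\<in>K. Q0 i)"
    "\<forall>i\<in>K. F_linked P1 le1 D (Q1 i)" "P1 = (\<Union>i\<in>K. Q1 i)"
    unfolding mu_F_linked_def by blast
  have "\<exists>Q. (\<forall>i\<in>K. F_linked (P0 \<times> P1) (prod_le le0 le1) D (Q i)) \<and> P0 \<times> P1 = (\<Union>i\<in>K. Q i)"
    using mu_gen[where LA="F_linked P0 le0 D" and LB="F_linked P1 le1 D" and L="F_linked (P0 \<times> P1) (prod_le le0 le1) D", OF conjunct1[OF conjunct2[OF H]] Q prod_linked[OF conjunct1[OF H]]] .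
  then show "mu_F_linked K (P0 \<times> P1) (prod_le le0 le1) D" unfolding mu_F_linked_def by blast
next
  fix D and \<theta> :: "'c rel"
  assume H: "nonprincipal_ultrafilter D \<and> Cinfinite \<theta> \<and> regularCard \<theta>
          \<and> theta_F_Knaster \<theta> P0 le0 D \<and> theta_F_Knaster \<theta> P1 le1 D"
  show "theta_F_Knaster \<theta> (P0 \<times> P1) (prod_le le0 le1) D"
    unfolding theta_F_Knaster_def
  proof (rule knaster_gen)
    show "Cinfinite \<theta>" by (rule conjunct1[OF conjunct2[OF H]])
    show "regularCard \<theta>" by (rule conjunct1[OF conjunct2[OF conjunct2[OF H]]])
    have h0: "theta_F_Knaster \<theta> P0 le0 D" by (rule conjunct1[OF conjunct2[OF conjunct2[OF conjunct2[OF H]]]])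
    have h1: "theta_F_Knaster \<theta> P1 le1 D" by (rule conjunct2[OF conjunct2[OF conjunct2[OF conjunct2[OF H]]]])
    show "\<forall>Z. Z \<subseteq> P0 \<and> (card_of Z, \<theta>) \<in> ordIso \<longrightarrow> (\<exists>Y. Y \<subseteq> Z \<and> (card_of Y, \<theta>) \<in> ordIso \<and> F_linked P0 le0 D Y)"
      using h0 unfolding theta_F_Knaster_def .
    show "\<forall>Z. Z \<subseteq> P1 \<and> (card_of Z, \<theta>) \<in> ordIso \<longrightarrow> (\<exists>Y. Y \<subseteq> Z \<and> (card_of Y, \<theta>) \<in> ordIso \<and> F_linked P1 le1 D Y)"
      using h1 unfolding theta_F_Knaster_def .
    show "\<forall>a\<in>P0. F_linked P0 le0 D {a}" by (rule single_D[OF conjunct1[OF H] assms(1)])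
    show "\<forall>a\<in>P1. F_linked P1 le1 D {a}" by (rule single_D[OF conjunct1[OF H] assms(2)])
    fix A B Y assume a: "F_linked P0 le0 D A" "F_linked P1 le1 D B" "Y \<subseteq> A \<times> B" "Y \<subseteq> P0 \<times> P1"
    have D: "nonprincipal_ultrafilter D" using H by blast
    show "F_linked (P0 \<times> P1) (prod_le le0 le1) D Y"
      by (rule linked_mono[OF prod_linked[OF D a(1) a(2)] a(3)])
  qed
next
  fix Q0 Q1 assume "uf_linked P0 le0 Q0 \<and> uf_linked P1 le1 Q1"
  then show "uf_linked (P0 \<times> P1) (prod_le le0 le1) (Q0 \<times> Q1)" using ufl_prod by blast
next
  fix K :: "'k set"
  assume H: "infinite K \<and> mu_uf_linked K P0 le0 \<and> mu_uf_linked K P1 le1"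
  then obtain Q0 Q1 where Q: "\<forall>i\<in>K. uf_linked P0 le0 (Q0 i)" "P0 = (\<Union>i\<in>K. Q0 i)"
    "\<forall>i\<in>K. uf_linked P1 le1 (Q1 i)" "P1 = (\<Union>i\<in>K. Q1 i)"
    unfolding mu_uf_linked_def by blast
  have "\<exists>Q. (\<forall>i\<in>K. uf_linked (P0 \<times> P1) (prod_le le0 le1) (Q i)) \<and> P0 \<times> P1 = (\<Union>i\<in>K. Q i)"
    using mu_gen[where LA="uf_linked P0 le0" and LB="uf_linked P1 le1" and L="uf_linked (P0 \<times> P1) (prod_le le0 le1)", OF conjunct1[OF H] Q ufl_prod] .
  then show "mu_uf_linked K (P0 \<times> P1) (prod_le le0 le1)" unfolding mu_uf_linked_def by blast
next
  fix \<theta> :: "'c rel"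
  assume H: "Cinfinite \<theta> \<and> regularCard \<theta>
          \<and> theta_uf_Knaster \<theta> P0 le0 \<and> theta_uf_Knaster \<theta> P1 le1"
  show "theta_uf_Knaster \<theta> (P0 \<times> P1) (prod_le le0 le1)"
    unfolding theta_uf_Knaster_def
  proof (rule knaster_gen)
    show "Cinfinite \<theta>" by (rule conjunct1[OF H])
    show "regularCard \<theta>" by (rule conjunct1[OF conjunct2[OF H]])
    have h0: "theta_uf_Knaster \<theta> P0 le0" by (rule conjunct1[OF conjunct2[OF conjunct2[OF H]]])
    have h1: "theta_uf_Knaster \<theta> P1 le1" by (rule conjunct2[OF conjunct2[OF conjunct2[OF H]]])
    show "\<forall>Z. Z \<subseteq> P0 \<and> (card_of Z, \<theta>) \<in> ordIso \<longrightarrow> (\<exists>Y. Y \<subseteq> Z \<and> (card_of Y, \<theta>) \<in> ordIso \<and> uf_linked P0 le0 Y)"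
      using h0 unfolding theta_uf_Knaster_def .
    show "\<forall>Z. Z \<subseteq> P1 \<and> (card_of Z, \<theta>) \<in> ordIso \<longrightarrow> (\<exists>Y. Y \<subseteq> Z \<and> (card_of Y, \<theta>) \<in> ordIso \<and> uf_linked P1 le1 Y)"
      using h1 unfolding theta_uf_Knaster_def .
    show "\<forall>a\<in>P0. uf_linked P0 le0 {a}" using ufl_single[OF assms(1)] by blast
    show "\<forall>a\<in>P1. uf_linked P1 le1 {a}" using ufl_single[OF assms(2)] by blast
    fix A B Y assume a: "uf_linked P0 le0 A" "uf_linked P1 le1 B" "Y \<subseteq> A \<times> B" "Y \<subseteq> P0 \<times> P1"
    show "uf_linked (P0 \<times> P1) (prod_le le0 le1) Y"
      by (rule ufl_mono[OF ufl_prod[OF a(1) a(2)] a(3)])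
  qed
qed

end
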